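(* Let $G$ be a finite group such that $|Z(G)|$ has at least two distinct prime divisors. Then the difference graph $\mathcal{D}(G)$ is bipartite if and only if $G\cong\mathbb{Z}_{p^{\alpha}q}$, where $p,q$ are distinct primes and $\alpha\ge 1$.
   Context: For a finite group $G$ with identity $e$: the intersection power graph $\mathcal{G}_I(G)$ has vertex set $G$, two distinct non-identity vertices $x,y$ being adjacent iff $\langle x\rangle\cap\langle y\rangle\neq\{e\}$, and $e$ being adjacent to every other vertex. The power graph $\mathcal{P}(G)$ has vertex set $G$, two distinct vertices being adjacent iff one is a power of the other. The difference graph $\mathcal{D}(G)$ is the graph on vertex set $G$ with edge set $E(\mathcal{G}_I(G))\setminus E(\mathcal{P}(G))$, with all isolated vertices removed. $Z(G)$ denotes the center of $G$. *)

theory Defs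
  imports "HOL-Algebra.Algebra" "HOL-Computational_Algebra.Primes"
begin

definition group_center :: "('a, 'b) monoid_scheme \<Rightarrow> 'a set" where
  "group_center G = {z \<in> carrier G. \<forall>g \<in> carrier G. z \<otimes>\<^bsub>G\<^esub> g = g \<otimes>\<^bsub>G\<^esub> z}"

definition ipg_edge :: "('a, 'b) monoid_scheme \<Rightarrow> 'a \<Rightarrow> 'a \<Rightarrow> bool" where
  "ipg_edge G x y \<longleftrightarrow> x \<in> carrier G \<and> y \<in> carrier G \<and> x \<noteq> y \<and>
     (x = \<one>\<^bsub>G\<^esub> \<or> y = \<one>\<^bsub>G\<^esub> \<or>
      generate G {x} \<inter> generate G {y} \<noteq> {\<one>\<^bsub>G\<^esub>})"

definition pg_edge :: "('a, 'b) monoid_scheme \<Rightarrow> 'a \<Rightarrow> 'a \<Rightarrow> bool" where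
  "pg_edge G x y \<longleftrightarrow> x \<in> carrier G \<and> y \<in> carrier G \<and> x \<noteq> y \<and>
     ((\<exists>n::nat. y = x [^]\<^bsub>G\<^esub> n) \<or> (\<exists>n::nat. x = y [^]\<^bsub>G\<^esub> n))"

definition diff_edge :: "('a, 'b) monoid_scheme \<Rightarrow> 'a \<Rightarrow> 'a \<Rightarrow> bool" where
  "diff_edge G x y \<longleftrightarrow> ipg_edge G x y \<and> \<not> pg_edge G x y"

definition diff_vertices :: "('a, 'b) monoid_scheme \<Rightarrow> 'a set" where
  "diff_vertices G = {x \<in> carrier G. \<exists>y. diff_edge G x y}"

definition bipartite :: "'a set \<Rightarrow> ('a \<Rightarrow> 'a \<Rightarrow> bool) \<Rightarrow> bool" where
  "bipartite V E \<longleftrightarrow> (\<exists>A B. A \<inter> B = {} \<and> A \<union> B = V \<and>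
     (\<forall>x \<in> V. \<forall>y \<in> V. E x y \<longrightarrow> (x \<in> A \<and> y \<in> B) \<or> (x \<in> B \<and> y \<in> A)))"

end

theory Submission
  imports Defs
begin

definition pw :: "('a, 'b) monoid_scheme \<Rightarrow> 'a \<Rightarrow> 'a \<Rightarrow> bool" where
  "pw G x y \<longleftrightarrow> (\<exists>n::nat. x = y [^]\<^bsub>G\<^esub> n)"

lemma inv_mod_nat:
  fixes k N :: nat
  assumes "coprime k N"
  shows "\<exists>s. (k * s) mod N = Suc 0 mod N"
proof (cases "k = 0")
  case True
  then have "N = 1" using assms by simp
  then show ?thesis by simp
next
  case False
  obtain x y where "k * x = N * y + gcd k N" using bezout_nat[OF False] by blast
  then have "k * x = N * y + 1" using assms by simp
  then have "(k * x) mod N = (Suc 0 + y * N) mod N" by (simp add: mult.commute)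
  also have "\<dots> = Suc 0 mod N" by (rule mod_mult_self1)
  finally have "(k * x) mod N = Suc 0 mod N" .
  then show ?thesis by blast
qed

locale fgroup = group G for G (structure) +
  assumes fin: "finite (carrier G)"
begin

lemma pw_refl: "x \<in> carrier G \<Longrightarrow> pw G x x"
  unfolding pw_def by (rule exI[of _ 1]) simp

lemma pw_one: "pw G \<one> x"
  unfolding pw_def by (rule exI[of _ 0]) simp

lemma pw_closed: "pw G x y \<Longrightarrow> y \<in> carrier G \<Longrightarrow> x \<in> carrier G"
  unfolding pw_def by auto

lemma pw_trans: "pw G x y \<Longrightarrow> pw G y z \<Longrightarrow> z \<in> carrier G \<Longrightarrow> pw G x z"
  unfolding pw_def by (metis nat_pow_pow)

lemma pw_mult: "pw G u w \<Longrightarrow> pw G v w \<Longrightarrow> w \<in> carrier G \<Longrightarrow> pw G (u \<otimes> v) w"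
  unfolding pw_def by (metis nat_pow_mult)

lemma pw_pow: "pw G u w \<Longrightarrow> w \<in> carrier G \<Longrightarrow> pw G (u [^] (k::nat)) w"
  unfolding pw_def by (metis nat_pow_pow)

lemma inv_as_pow: "u \<in> carrier G \<Longrightarrow> inv u = u [^] (order G - 1)"
proof -
  assume u: "u \<in> carrier G"
  have o: "order G \<ge> 1" using fin by (metis One_nat_def Suc_leI order_gt_0_iff_finite)
  have "u [^] (order G - 1) \<otimes> u = u [^] (Suc (order G - 1))"
    using u by (simp only: nat_pow_Suc)
  also have "\<dots> = \<one>" using o u pow_order_eq_1 by simp
  finally show ?thesis using u by (simp add: inv_equality)
qed

lemma pw_inv: "pw G u w \<Longrightarrow> w \<in> carrier G \<Longrightarrow> pw G (inv u) w"
  using inv_as_pow pw_pow pw_closed by metis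

lemma pw_exp: "pw G x y \<Longrightarrow> y \<in> carrier G \<Longrightarrow> y [^] (m::nat) = \<one> \<Longrightarrow> x [^] m = \<one>"
  unfolding pw_def by (metis mult.commute nat_pow_one nat_pow_pow)

lemma one_of_coprime:
  assumes "x \<in> carrier G" "x [^] (m::nat) = \<one>" "x [^] (n::nat) = \<one>" "coprime m n"
  shows "x = \<one>"
proof -
  have "ord x dvd m" "ord x dvd n" using assms pow_eq_id by auto
  then have "ord x dvd gcd m n" by simp
  then have "ord x = 1" using assms(4) by simp
  then show ?thesis using assms(1) ord_eq_1 by blast
qed

lemma exp_gcd:
  assumes "x \<in> carrier G" "x [^] (m::nat) = \<one>" "x [^] (n::nat) = \<one>"
  shows "x [^] gcd m n = \<one>"
proof -
  have "ord x dvd m" "ord x dvd n" using assms pow_eq_id by auto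
  then have "ord x dvd gcd m n" by simp
  then show ?thesis using assms(1) pow_eq_id by blast
qed

lemma pow_mod_eq:
  assumes x: "x \<in> carrier G" and N: "x [^] (N::nat) = \<one>" and e: "m mod N = n mod N"
  shows "x [^] m = x [^] n"
proof -
  have h: "x [^] (N * t + r) = x [^] r" for t r :: nat
  proof -
    have "x [^] (N * t + r) = x [^] (N * t) \<otimes> x [^] r" using x by (simp add: nat_pow_mult)
    also have "x [^] (N * t) = (x [^] N) [^] t" using x by (simp add: nat_pow_pow)
    finally show ?thesis using N x by simp
  qed
  have "x [^] m = x [^] (m mod N)" using h[of "m div N" "m mod N"] by simp
  moreover have "x [^] n = x [^] (n mod N)" using h[of "n div N" "n mod N"] by simp
  ultimately show ?thesis using e by simp
qed

lemma pw_pow_coprime: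
  assumes x: "x \<in> carrier G" and N: "x [^] (N::nat) = \<one>" and c: "coprime k N"
  shows "pw G x (x [^] k)"
proof -
  obtain s where s: "(k * s) mod N = Suc 0 mod N" using inv_mod_nat[OF c] by blast
  have "x [^] (k * s) = x [^] (Suc 0)"
    by (rule pow_mod_eq[OF x N]) (use s in simp)
  then have "x = (x [^] k) [^] s" using x by (simp add: nat_pow_pow)
  then show ?thesis unfolding pw_def by blast
qed

lemma pw_prod:
  assumes x: "x \<in> carrier G" and y: "y \<in> carrier G" and cm: "x \<otimes> y = y \<otimes> x"
    and xm: "x [^] (m::nat) = \<one>" and yn: "y [^] (n::nat) = \<one>" and c: "coprime m n"
  shows "pw G x (x \<otimes> y)"
proof -
  have c': "coprime n m" using c by (simp add: coprime_commute)
  obtain s where s: "(n * s) mod m = Suc 0 mod m" using inv_mod_nat[OF c'] by blast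
  have "(x \<otimes> y) [^] (n * s) = x [^] (n * s) \<otimes> y [^] (n * s)"
    using pow_mult_distrib[OF cm x y] by simp
  also have "y [^] (n * s) = \<one>" using yn y by (simp add: nat_pow_pow[symmetric])
  also have "x [^] (n * s) = x [^] (Suc 0)"
    by (rule pow_mod_eq[OF x xm]) (use s in simp)
  finally show ?thesis unfolding pw_def using x by (metis nat_pow_eone r_one One_nat_def)
qed

lemma pw_prod2:
  assumes x: "x \<in> carrier G" and y: "y \<in> carrier G" and cm: "x \<otimes> y = y \<otimes> x"
    and xm: "x [^] (m::nat) = \<one>" and yn: "y [^] (n::nat) = \<one>" and c: "coprime m n"
  shows "pw G y (x \<otimes> y)"
  using pw_prod[OF y x cm[symmetric] yn xm] c cm by (simp add: coprime_commute)

lemma pw_strip: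
  assumes y: "y \<in> carrier G" and z: "z \<in> carrier G" and cm: "y \<otimes> z = z \<otimes> y"
    and xm: "x [^] (m::nat) = \<one>" and zn: "z [^] (n::nat) = \<one>" and c: "coprime m n"
    and h: "pw G x (y \<otimes> z)"
  shows "pw G x y"
proof -
  obtain k :: nat where k: "x = (y \<otimes> z) [^] k" using h unfolding pw_def by blast
  have xc: "x \<in> carrier G" using k y z by simp
  have c': "coprime n m" using c by (simp add: coprime_commute)
  obtain s where s: "(n * s) mod m = Suc 0 mod m" using inv_mod_nat[OF c'] by blast
  have "x = x [^] (Suc 0)" using xc by simp
  also have "\<dots> = x [^] (n * s)" by (rule pow_mod_eq[OF xc xm]) (use s in simp)
  also have "\<dots> = (y \<otimes> z) [^] (k * (n * s))" using k y z by (simp add: nat_pow_pow)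
  also have "\<dots> = y [^] (k * (n * s)) \<otimes> z [^] (k * (n * s))"
    using pow_mult_distrib[OF cm y z] by simp
  also have "z [^] (k * (n * s)) = \<one>" using zn z
    by (metis mult.left_commute nat_pow_one nat_pow_pow)
  finally show ?thesis unfolding pw_def using y by auto
qed

lemma gen_prime:
  assumes a: "a \<in> carrier G" and p: "Factorial_Ring.prime (p::nat)" and ap: "a [^] p = \<one>"
    and h: "pw G x a" and x1: "x \<noteq> \<one>"
  shows "pw G a x"
proof -
  obtain k :: nat where k: "x = a [^] k" using h unfolding pw_def by blast
  have "\<not> p dvd k"
  proof
    assume "p dvd k" then obtain t where "k = p * t" by blast
    then have "x = \<one>" using k a ap by (simp add: nat_pow_pow[symmetric])
    then show False using x1 by simp
  qed
  then have "coprime k p" using p by (metis prime_imp_coprime coprime_commute)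
  then show ?thesis using pw_pow_coprime[OF a ap] k by simp
qed

lemma prime_order_power:
  assumes x: "x \<in> carrier G" and "x [^] ((p::nat) ^ i) = \<one>" and "x \<noteq> \<one>"
  shows "\<exists>j. x [^] (p ^ j) \<noteq> \<one> \<and> (x [^] (p ^ j)) [^] p = \<one>"
  using assms(2)
proof (induction i)
  case 0 then show ?case using assms by simp
next
  case (Suc i)
  show ?case
  proof (cases "x [^] (p ^ i) = \<one>")
    case True then show ?thesis using Suc.IH by blast
  next
    case False
    have "(x [^] (p ^ i)) [^] p = \<one>" using Suc.prems x
      by (simp add: nat_pow_pow mult.commute)
    then show ?thesis using False by blast
  qed
qed

lemma ord_pw_dvd: "pw G w z \<Longrightarrow> z \<in> carrier G \<Longrightarrow> ord w dvd ord z"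
  by (metis pow_ord_eq_1 pw_closed pw_exp pow_eq_id)

lemma ord_prod:
  assumes x: "x \<in> carrier G" and y: "y \<in> carrier G" and cm: "x \<otimes> y = y \<otimes> x"
    and c: "coprime (ord x) (ord y)"
  shows "ord (x \<otimes> y) = ord x * ord y"
proof -
  have "(x \<otimes> y) [^] k = \<one> \<longleftrightarrow> ord x * ord y dvd k" for k :: nat
  proof
    assume h: "(x \<otimes> y) [^] k = \<one>"
    then have e: "x [^] k \<otimes> y [^] k = \<one>" using pow_mult_distrib[OF cm x y] by simp
    then have xk: "x [^] k = inv (y [^] k)" using x y by (simp add: inv_char inv_equality)
    have "pw G (x [^] k) y" unfolding xk by (rule pw_inv) (auto simp: pw_def y)
    then have "(x [^] k) [^] ord y = \<one>" using pw_exp y by simp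
    moreover have "(x [^] k) [^] ord x = \<one>" using x
      by (metis mult.commute nat_pow_one nat_pow_pow pow_ord_eq_1)
    ultimately have "x [^] k = \<one>" using one_of_coprime c x by (metis coprime_commute nat_pow_closed)
    then have "y [^] k = \<one>" using e x y by simp
    with \<open>x [^] k = \<one>\<close> have "ord x dvd k" "ord y dvd k" using x y pow_eq_id by auto
    then show "ord x * ord y dvd k" using c by (simp add: divides_mult)
  next
    assume "ord x * ord y dvd k"
    then obtain t where t: "k = ord x * ord y * t" by blast
    have "(x \<otimes> y) [^] k = x [^] k \<otimes> y [^] k" using pow_mult_distrib[OF cm x y] by simp
    also have "x [^] k = \<one>" using t x pow_eq_id by auto
    also have "y [^] k = \<one>" using t y pow_eq_id by auto
    finally show "(x \<otimes> y) [^] k = \<one>" by simp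
  qed
  then show ?thesis using x y ord_unique by simp
qed

end

definition E :: "('a, 'b) monoid_scheme \<Rightarrow> 'a \<Rightarrow> 'a \<Rightarrow> bool" where
  "E G x y \<longleftrightarrow> x \<in> carrier G \<and> y \<in> carrier G \<and> \<not> pw G x y \<and> \<not> pw G y x \<and>
     (\<exists>z. z \<noteq> \<one>\<^bsub>G\<^esub> \<and> pw G z x \<and> pw G z y)"

lemma diff_edge_sym: "diff_edge G x y \<Longrightarrow> diff_edge G y x"
  unfolding diff_edge_def ipg_edge_def pg_edge_def by auto

lemma bip_side:
  assumes "bipartite (diff_vertices G) (diff_edge G)"
  obtains A where "\<And>u w. diff_edge G u w \<Longrightarrow> (u \<in> A \<longleftrightarrow> w \<notin> A)"
proof -
  obtain A B where AB: "A \<inter> B = {}" "A \<union> B = diff_vertices G"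
    "\<forall>x \<in> diff_vertices G. \<forall>y \<in> diff_vertices G. diff_edge G x y \<longrightarrow> (x \<in> A \<and> y \<in> B) \<or> (x \<in> B \<and> y \<in> A)"
    using assms(1) unfolding bipartite_def by blast
  have "u \<in> A \<longleftrightarrow> w \<notin> A" if d: "diff_edge G u w" for u w
  proof -
    have "u \<in> diff_vertices G" "w \<in> diff_vertices G"
      using d diff_edge_sym[OF d] unfolding diff_vertices_def diff_edge_def ipg_edge_def by blast+
    then have "(u \<in> A \<and> w \<in> B) \<or> (u \<in> B \<and> w \<in> A)" using AB(3) d by blast
    then show ?thesis using AB(1) by blast
  qed
  then show ?thesis using that by blast
qed

lemma bip_tri:
  assumes "bipartite (diff_vertices G) (diff_edge G)"
    and "diff_edge G x y" "diff_edge G y z" "diff_edge G x z"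
  shows False
proof -
  obtain A where A: "\<And>u w. diff_edge G u w \<Longrightarrow> (u \<in> A \<longleftrightarrow> w \<notin> A)"
    using bip_side[OF assms(1)] by blast
  have "x \<in> A \<longleftrightarrow> y \<notin> A" "y \<in> A \<longleftrightarrow> z \<notin> A" "x \<in> A \<longleftrightarrow> z \<notin> A"
    using A[OF assms(2)] A[OF assms(3)] A[OF assms(4)] by simp_all
  then show False by blast
qed

lemma bip_five:
  assumes "bipartite (diff_vertices G) (diff_edge G)"
    and "diff_edge G x1 x2" "diff_edge G x2 x3" "diff_edge G x3 x4" "diff_edge G x4 x5" "diff_edge G x5 x1"
  shows False
proof -
  obtain A where A: "\<And>u w. diff_edge G u w \<Longrightarrow> (u \<in> A \<longleftrightarrow> w \<notin> A)"
    using bip_side[OF assms(1)] by blast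
  have "x1 \<in> A \<longleftrightarrow> x2 \<notin> A" "x2 \<in> A \<longleftrightarrow> x3 \<notin> A" "x3 \<in> A \<longleftrightarrow> x4 \<notin> A"
    "x4 \<in> A \<longleftrightarrow> x5 \<notin> A" "x5 \<in> A \<longleftrightarrow> x1 \<notin> A"
    using A[OF assms(2)] A[OF assms(3)] A[OF assms(4)] A[OF assms(5)] A[OF assms(6)] by simp_all
  then show False by blast
qed

context fgroup
begin

lemma gen_pw: "x \<in> carrier G \<Longrightarrow> generate G {x} = {z. pw G z x}"
  using generate_pow_on_finite_carrier[OF fin] unfolding pw_def by auto

lemma diff_edge_iff: "diff_edge G x y \<longleftrightarrow> E G x y"
proof
  assume d: "diff_edge G x y"
  then have xy: "x \<in> carrier G" "y \<in> carrier G"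
    unfolding diff_edge_def ipg_edge_def by auto
  have np: "\<not> pw G y x" "\<not> pw G x y" using d xy unfolding diff_edge_def pg_edge_def ipg_edge_def pw_def by auto
  then have "x \<noteq> \<one>" "y \<noteq> \<one>" using pw_one by auto
  then have "generate G {x} \<inter> generate G {y} \<noteq> {\<one>}" using d unfolding diff_edge_def ipg_edge_def by auto
  moreover have "\<one> \<in> generate G {x} \<inter> generate G {y}" using pw_one xy gen_pw by auto
  ultimately obtain z where "z \<in> generate G {x} \<inter> generate G {y}" "z \<noteq> \<one>" by blast
  then show "E G x y" unfolding E_def using xy np gen_pw by auto
next
  assume e: "E G x y"
  then have xy: "x \<in> carrier G" "y \<in> carrier G" and np: "\<not> pw G y x" "\<not> pw G x y"
    unfolding E_def by auto
  obtain z where z: "z \<noteq> \<one>" "pw G z x" "pw G z y" using e unfolding E_def by auto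
  have "x \<noteq> y" using np pw_refl xy by auto
  moreover have "generate G {x} \<inter> generate G {y} \<noteq> {\<one>}" using z xy gen_pw by auto
  ultimately show "diff_edge G x y" using xy np unfolding diff_edge_def ipg_edge_def pg_edge_def pw_def
    by auto
qed

lemma no_tri:
  assumes "bipartite (diff_vertices G) (diff_edge G)" "E G x y" "E G y z" "E G x z"
  shows False
  using bip_tri[OF assms(1), of x y z] assms(2-4) by (simp add: diff_edge_iff)

lemma no_five:
  assumes "bipartite (diff_vertices G) (diff_edge G)"
    "E G x1 x2" "E G x2 x3" "E G x3 x4" "E G x4 x5" "E G x5 x1"
  shows False
  using bip_five[OF assms(1), of x1 x2 x3 x4 x5] assms(2-6) by (simp add: diff_edge_iff)

end

lemma center_subgroup:
  fixes G (structure)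
  assumes "group G"
  shows "subgroup (group_center G) G"
proof -
  interpret group G by fact
  show ?thesis
  proof
    show "group_center G \<subseteq> carrier G" unfolding group_center_def by auto
    show "\<one> \<in> group_center G" unfolding group_center_def by auto
  next
    fix x y assume "x \<in> group_center G" "y \<in> group_center G"
    then have xy: "x \<in> carrier G" "y \<in> carrier G" "\<And>g. g \<in> carrier G \<Longrightarrow> x \<otimes> g = g \<otimes> x"
      "\<And>g. g \<in> carrier G \<Longrightarrow> y \<otimes> g = g \<otimes> y" unfolding group_center_def by auto
    have "(x \<otimes> y) \<otimes> g = g \<otimes> (x \<otimes> y)" if g: "g \<in> carrier G" for g
    proof -
      have "(x \<otimes> y) \<otimes> g = x \<otimes> (y \<otimes> g)" using xy(1,2) g by (simp add: m_assoc)
      also have "\<dots> = x \<otimes> (g \<otimes> y)" using xy(4)[OF g] by simp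
      also have "\<dots> = (x \<otimes> g) \<otimes> y" using xy(1,2) g by (simp add: m_assoc)
      also have "\<dots> = (g \<otimes> x) \<otimes> y" using xy(3)[OF g] by simp
      also have "\<dots> = g \<otimes> (x \<otimes> y)" using xy(1,2) g by (simp add: m_assoc)
      finally show ?thesis .
    qed
    then show "x \<otimes> y \<in> group_center G" using xy(1,2) unfolding group_center_def by auto
  next
    fix x assume x: "x \<in> group_center G"
    then have xc: "x \<in> carrier G" unfolding group_center_def by auto
    have "inv x \<otimes> g = g \<otimes> inv x" if g: "g \<in> carrier G" for g
    proof -
      have "x \<otimes> g = g \<otimes> x" using x g unfolding group_center_def by auto
      have canc: "inv x \<otimes> (x \<otimes> h) = h" if "h \<in> carrier G" for h
        using xc that by (simp add: m_assoc[symmetric])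
      have "inv x \<otimes> g = inv x \<otimes> (g \<otimes> x) \<otimes> inv x" using xc g by (simp add: m_assoc)
      also have "\<dots> = inv x \<otimes> (x \<otimes> g) \<otimes> inv x" using \<open>x \<otimes> g = g \<otimes> x\<close> by simp
      also have "\<dots> = g \<otimes> inv x" using xc g by (simp add: m_assoc canc)
      finally show ?thesis .
    qed
    then show "inv x \<in> group_center G" using xc unfolding group_center_def by auto
  qed
qed

lemma cauchy:
  fixes H (structure)
  assumes H: "group H" "finite (carrier H)" and r: "Factorial_Ring.prime (r::nat)" "r dvd order H"
  shows "\<exists>x \<in> carrier H. x \<noteq> \<one>\<^bsub>H\<^esub> \<and> x [^]\<^bsub>H\<^esub> r = \<one>\<^bsub>H\<^esub>"
proof -
  interpret group H by fact
  have "order H = r ^ 1 * (order H div r)" using r by simp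
  then obtain K where K: "subgroup K H" "card K = r ^ 1"
    using sylow_thm[OF r(1) H(1) _ H(2)] by blast
  then have K: "subgroup K H" "card K = r" by auto
  have gK: "group (H\<lparr>carrier := K\<rparr>)" using subgroup_imp_group[OF K(1)] .
  have "\<not> K \<subseteq> {\<one>}"
  proof
    assume sub: "K \<subseteq> {\<one>}"
    have "card K \<le> card {\<one>}" using card_mono[of "{\<one>}" K] sub by simp
    then have "r \<le> 1" using K(2) by simp
    then show False using prime_gt_1_nat[OF r(1)] by simp
  qed
  then obtain x where x: "x \<in> K" "x \<noteq> \<one>" by blast
  have "x [^]\<^bsub>H\<lparr>carrier := K\<rparr>\<^esub> (order (H\<lparr>carrier := K\<rparr>)) = \<one>\<^bsub>H\<lparr>carrier := K\<rparr>\<^esub>"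
    using group.pow_order_eq_1[OF gK] x by simp
  then have "x [^] r = \<one>" using K(2) by (simp add: order_def nat_pow_consistent[symmetric])
  then show ?thesis using x K(1) subgroup.subset by blast
qed

lemma center_cauchy:
  fixes G (structure)
  assumes G: "group G" "finite (carrier G)" and r: "Factorial_Ring.prime (r::nat)" "r dvd card (group_center G)"
  shows "\<exists>x \<in> group_center G. x \<noteq> \<one>\<^bsub>G\<^esub> \<and> x [^]\<^bsub>G\<^esub> r = \<one>\<^bsub>G\<^esub>"
proof -
  interpret group G by fact
  have S: "subgroup (group_center G) G" using center_subgroup[OF G(1)] .
  have gK: "group (G\<lparr>carrier := group_center G\<rparr>)" using subgroup_imp_group[OF S] .
  have "finite (group_center G)" using G(2) S subgroup.subset finite_subset by blast
  then obtain x where "x \<in> group_center G" "x \<noteq> \<one>" "x [^]\<^bsub>G\<lparr>carrier := group_center G\<rparr>\<^esub> r = \<one>"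
    using cauchy[OF gK] r by (auto simp: order_def)
  then show ?thesis by (auto simp: nat_pow_consistent[symmetric])
qed

lemma cop_pow:
  fixes p q :: nat
  assumes "Factorial_Ring.prime p" "Factorial_Ring.prime q" "p \<noteq> q"
  shows "coprime (p ^ i) (q ^ j)"
  using primes_coprime[OF assms] by simp

lemma pq_dvd:
  fixes p q :: nat
  assumes p: "Factorial_Ring.prime p" and q: "Factorial_Ring.prime q" and pq: "p \<noteq> q"
    and d: "p ^ a * q ^ b dvd p ^ c * q ^ d"
  shows "a \<le> c \<and> b \<le> d"
proof -
  have "p ^ a dvd p ^ a * q ^ b" by simp
  then have "p ^ a dvd p ^ c * q ^ d" using d by (rule dvd_trans)
  moreover have "coprime (p ^ a) (q ^ d)" using cop_pow[OF p q pq] .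
  ultimately have "p ^ a dvd p ^ c" by (simp add: coprime_dvd_mult_left_iff)
  then have 1: "a \<le> c" by (rule power_dvd_imp_le[OF _ prime_gt_1_nat[OF p]])
  have "q ^ b dvd p ^ a * q ^ b" by simp
  then have "q ^ b dvd p ^ c * q ^ d" using d by (rule dvd_trans)
  moreover have "coprime (q ^ b) (p ^ c)" using cop_pow[OF q p] pq by simp
  ultimately have "q ^ b dvd q ^ d" by (simp add: coprime_dvd_mult_right_iff)
  then have 2: "b \<le> d" by (rule power_dvd_imp_le[OF _ prime_gt_1_nat[OF q]])
  show ?thesis using 1 2 by simp
qed

lemma factor_pq:
  fixes p q n :: nat
  assumes p: "Factorial_Ring.prime p" and q: "Factorial_Ring.prime q" and n: "n \<noteq> 0"
    and r: "\<And>r. Factorial_Ring.prime r \<Longrightarrow> r dvd n \<Longrightarrow> r = p \<or> r = q"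
  shows "\<exists>i j. n = p ^ i * q ^ j"
proof -
  have pu: "\<not> is_unit p" using prime_gt_1_nat[OF p] by simp
  have qu: "\<not> is_unit q" using prime_gt_1_nat[OF q] by simp
  obtain m where m: "n = p ^ multiplicity p n * m" "\<not> p dvd m"
    using multiplicity_decompose'[OF n pu] by blast
  have m0: "m \<noteq> 0" using m(1) n by (metis mult_0_right)
  obtain m' where m': "m = q ^ multiplicity q m * m'" "\<not> q dvd m'"
    using multiplicity_decompose'[OF m0 qu] by blast
  have "m' = 1"
  proof (rule ccontr)
    assume "m' \<noteq> 1"
    then obtain r where rr: "Factorial_Ring.prime r" "r dvd m'" using prime_factor_nat by blast
    then have "r dvd m" using m'(1) by (metis dvd_mult)
    then have "r dvd n" using m(1) by (metis dvd_mult)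
    then have "r = p \<or> r = q" using r rr(1) by blast
    then show False
    proof
      assume "r = p" then show False using \<open>r dvd m\<close> m(2) by simp
    next
      assume "r = q" then show False using rr(2) m'(2) by simp
    qed
  qed
  then show ?thesis using m m' by (metis mult.right_neutral)
qed

lemma div_form:
  fixes p q d :: nat
  assumes p: "Factorial_Ring.prime p" and q: "Factorial_Ring.prime q" and pq: "p \<noteq> q"
    and d: "d dvd p ^ a * q"
  shows "\<exists>e. d = p ^ e \<or> d = p ^ e * q"
proof (cases "q dvd d")
  case True
  then obtain d' where d': "d = q * d'" by blast
  then have "q * d' dvd q * p ^ a" using d by (simp add: mult.commute)
  then have "d' dvd p ^ a" using q by (simp add: prime_gt_0_nat)
  then obtain e where "d' = p ^ e" using divides_primepow_nat[OF p] by blast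
  then show ?thesis using d' by (auto simp: mult.commute)
next
  case False
  then have "coprime d q" using q by (metis prime_imp_coprime coprime_commute)
  then have "d dvd p ^ a" using d by (simp add: coprime_dvd_mult_left_iff)
  then obtain e where "d = p ^ e" using divides_primepow_nat[OF p] by blast
  then show ?thesis by blast
qed

lemma comparable_gcd:
  fixes p q Xn Yn n :: nat
  assumes p: "Factorial_Ring.prime p" and q: "Factorial_Ring.prime q" and pq: "p \<noteq> q"
    and n: "n = p ^ a * q" and iff: "q dvd Xn \<longleftrightarrow> q dvd Yn"
  shows "gcd Xn n dvd Yn \<or> gcd Yn n dvd Xn"
proof -
  have qp: "\<not> q dvd p ^ e" for e
  proof
    assume "q dvd p ^ e"
    then have "q dvd p" using prime_dvd_power[OF q] by blast
    then show False using primes_dvd_imp_eq[OF q p] pq by blast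
  qed
  have qn: "q dvd n" using n by simp
  obtain e1 where e1: "gcd Xn n = p ^ e1 \<or> gcd Xn n = p ^ e1 * q"
    using div_form[OF p q pq, of "gcd Xn n" a] n by auto
  obtain e2 where e2: "gcd Yn n = p ^ e2 \<or> gcd Yn n = p ^ e2 * q"
    using div_form[OF p q pq, of "gcd Yn n" a] n by auto
  have lin: "p ^ e1 dvd p ^ e2 \<or> p ^ e2 dvd p ^ e1"
  proof (cases "e1 \<le> e2")
    case True then show ?thesis by (simp add: le_imp_power_dvd)
  next
    case False then show ?thesis by (simp add: le_imp_power_dvd)
  qed
  have "gcd Xn n dvd gcd Yn n \<or> gcd Yn n dvd gcd Xn n"
  proof (cases "q dvd Xn")
    case True
    then have d1: "q dvd gcd Xn n" using qn by (rule gcd_greatest)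
    have d2: "q dvd gcd Yn n" using True iff qn by (simp add: gcd_greatest)
    have f1: "gcd Xn n = p ^ e1 * q"
    proof (rule disjE[OF e1])
      assume h: "gcd Xn n = p ^ e1"
      then show ?thesis using d1 qp[of e1] by simp
    qed
    have f2: "gcd Yn n = p ^ e2 * q"
    proof (rule disjE[OF e2])
      assume h: "gcd Yn n = p ^ e2"
      then show ?thesis using d2 qp[of e2] by simp
    qed
    show ?thesis unfolding f1 f2 using lin by (meson dvd_refl mult_dvd_mono)
  next
    case False
    have d1: "\<not> q dvd gcd Xn n" using False by (meson dvd_trans gcd_dvd1)
    have d2: "\<not> q dvd gcd Yn n" using False iff by (meson dvd_trans gcd_dvd1)
    have f1: "gcd Xn n = p ^ e1"
    proof (rule disjE[OF e1])
      assume h: "gcd Xn n = p ^ e1 * q"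
      then show ?thesis using d1 by simp
    qed
    have f2: "gcd Yn n = p ^ e2"
    proof (rule disjE[OF e2])
      assume h: "gcd Yn n = p ^ e2 * q"
      then show ?thesis using d2 by simp
    qed
    show ?thesis unfolding f1 f2 using lin .
  qed
  then show ?thesis
  proof
    assume "gcd Xn n dvd gcd Yn n"
    then show ?thesis using gcd_dvd1 dvd_trans by blast
  next
    assume "gcd Yn n dvd gcd Xn n"
    then show ?thesis using gcd_dvd1 dvd_trans by blast
  qed
qed

lemma bezout_mod:
  fixes Xn Yn n :: int
  assumes n: "n > 0" and d: "gcd Yn n dvd Xn"
  shows "\<exists>k::nat. Xn mod n = (int k * Yn) mod n"
proof -
  obtain u v where uv: "u * Yn + v * n = gcd Yn n" using bezout_int by blast
  obtain t where t: "Xn = gcd Yn n * t" using d by blast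
  define k where "k = nat ((t * u) mod n)"
  have kk: "int k = (t * u) mod n" unfolding k_def using n by simp
  have "(int k * Yn) mod n = ((t * u) * Yn) mod n" unfolding kk by (simp add: mod_mult_left_eq)
  also have "(t * u) * Yn = Xn + (- (t * v)) * n"
  proof -
    have "Xn = t * (u * Yn + v * n)" using t uv by (simp add: mult.commute)
    then show ?thesis by (simp add: algebra_simps)
  qed
  also have "(Xn + (- (t * v)) * n) mod n = Xn mod n" by (rule mod_mult_self1)
  finally show ?thesis by metis
qed

context fgroup
begin

lemma pow_prod_one:
  assumes "x \<in> carrier G" "y \<in> carrier G" "x \<otimes> y = y \<otimes> x" "x [^] (m::nat) = \<one>" "y [^] (n::nat) = \<one>"
  shows "(x \<otimes> y) [^] (m * n) = \<one>"
proof -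
  have "(x \<otimes> y) [^] (m * n) = x [^] (m * n) \<otimes> y [^] (m * n)" using pow_mult_distrib assms by blast
  also have "x [^] (m * n) = \<one>" using assms by (simp add: nat_pow_pow[symmetric])
  also have "y [^] (m * n) = \<one>" using assms by (metis mult.commute nat_pow_one nat_pow_pow)
  finally show ?thesis by simp
qed

lemma conj_pow:
  assumes g: "g \<in> carrier G" and x: "x \<in> carrier G"
  shows "(g \<otimes> x \<otimes> inv g) [^] (n::nat) = g \<otimes> x [^] n \<otimes> inv g"
proof (induction n)
  case 0 then show ?case using g by simp
next
  case (Suc n)
  have "(g \<otimes> x \<otimes> inv g) [^] Suc n = (g \<otimes> x [^] n \<otimes> inv g) \<otimes> (g \<otimes> x \<otimes> inv g)"
    using Suc by simp
  also have "\<dots> = g \<otimes> (x [^] n \<otimes> (inv g \<otimes> g) \<otimes> x) \<otimes> inv g"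
  proof -
    have canc: "\<And>y. y \<in> carrier G \<Longrightarrow> inv g \<otimes> (g \<otimes> y) = y" using g by (simp add: m_assoc[symmetric])
    show ?thesis using g x by (simp add: m_assoc canc)
  qed
  also have "\<dots> = g \<otimes> x [^] Suc n \<otimes> inv g" using g x by (simp add: m_assoc)
  finally show ?case .
qed

lemma comm_pows:
  assumes "x \<in> carrier G" "y \<in> carrier G" "x \<otimes> y = y \<otimes> x"
  shows "x [^] (m::nat) \<otimes> y [^] (n::nat) = y [^] n \<otimes> x [^] m"
proof -
  have "x [^] m \<otimes> y = y \<otimes> x [^] m" using group_commutes_pow assms by blast
  then have "y [^] n \<otimes> x [^] m = x [^] m \<otimes> y [^] n"
    using group_commutes_pow[of y "x [^] m" n] assms by simp
  then show ?thesis by simp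
qed

lemma pw_one_coprime:
  assumes "pw G u w" "w \<in> carrier G" "w [^] (n::nat) = \<one>" "u [^] (m::nat) = \<one>" "coprime m n"
  shows "u = \<one>"
  using assms pw_exp pw_closed one_of_coprime by blast

lemma E_c:
  assumes w1: "w1 \<in> carrier G" and w2: "w2 \<in> carrier G" and c: "c \<in> carrier G"
    and c1: "w1 \<otimes> c = c \<otimes> w1" and c2: "w2 \<otimes> c = c \<otimes> w2"
    and e1: "w1 [^] (m::nat) = \<one>" and e2: "w2 [^] m = \<one>" and ec: "c [^] (n::nat) = \<one>"
    and cop: "coprime m n" and cne: "c \<noteq> \<one>"
    and n12: "\<not> pw G w1 w2" and n21: "\<not> pw G w2 w1"
  shows "E G (w1 \<otimes> c) (w2 \<otimes> c)"
proof -
  have a1: "pw G w1 (w1 \<otimes> c)" by (rule pw_prod[OF w1 c c1 e1 ec cop])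
  have a2: "pw G w2 (w2 \<otimes> c)" by (rule pw_prod[OF w2 c c2 e2 ec cop])
  have b1: "pw G c (w1 \<otimes> c)" by (rule pw_prod2[OF w1 c c1 e1 ec cop])
  have b2: "pw G c (w2 \<otimes> c)" by (rule pw_prod2[OF w2 c c2 e2 ec cop])
  have "\<not> pw G (w1 \<otimes> c) (w2 \<otimes> c)"
  proof
    assume "pw G (w1 \<otimes> c) (w2 \<otimes> c)"
    then have "pw G w1 (w2 \<otimes> c)" using a1 pw_trans w2 c by blast
    then have "pw G w1 w2" using pw_strip[OF w2 c c2 e1 ec cop] by blast
    then show False using n12 by blast
  qed
  moreover have "\<not> pw G (w2 \<otimes> c) (w1 \<otimes> c)"
  proof
    assume "pw G (w2 \<otimes> c) (w1 \<otimes> c)"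
    then have "pw G w2 (w1 \<otimes> c)" using a2 pw_trans w1 c by blast
    then have "pw G w2 w1" using pw_strip[OF w1 c c1 e2 ec cop] by blast
    then show False using n21 by blast
  qed
  ultimately show ?thesis unfolding E_def using w1 w2 c b1 b2 cne by auto
qed

lemma cyclic_iso:
  assumes w: "w \<in> carrier G" and all: "\<And>x. x \<in> carrier G \<Longrightarrow> pw G x w"
  shows "G \<cong> integer_mod_group (ord w)"
proof -
  define N where "N = ord w"
  have N0: "N > 0" using ord_ge_1[OF fin w] N_def by simp
  have wN: "w [^] N = \<one>" using w N_def by simp
  define f where "f = (\<lambda>k::int. w [^] nat k)"
  have carrZ: "carrier (integer_mod_group N) = {0..<int N}"
    using N0 by (simp add: carrier_integer_mod_group)
  have hom: "f \<in> hom (integer_mod_group N) G"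
  proof (rule homI)
    fix x assume "x \<in> carrier (integer_mod_group N)"
    then show "f x \<in> carrier G" unfolding f_def using w by simp
  next
    fix x y assume x: "x \<in> carrier (integer_mod_group N)" and y: "y \<in> carrier (integer_mod_group N)"
    obtain a where a: "x = int a" using x carrZ by (metis atLeastLessThan_iff nonneg_int_cases)
    obtain b where b: "y = int b" using y carrZ by (metis atLeastLessThan_iff nonneg_int_cases)
    have "(x + y) mod int N = int ((a + b) mod N)" using a b by (simp add: zmod_int)
    then have "f (x \<otimes>\<^bsub>integer_mod_group N\<^esub> y) = w [^] ((a + b) mod N)" unfolding f_def by simp
    also have "\<dots> = w [^] (a + b)" by (rule pow_mod_eq[OF w wN]) simp
    also have "\<dots> = f x \<otimes> f y" unfolding f_def a b using w by (simp add: nat_pow_mult)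
    finally show "f (x \<otimes>\<^bsub>integer_mod_group N\<^esub> y) = f x \<otimes> f y" .
  qed
  have inj: "inj_on f (carrier (integer_mod_group N))"
  proof (rule inj_onI)
    fix x y assume x: "x \<in> carrier (integer_mod_group N)" and y: "y \<in> carrier (integer_mod_group N)"
      and e: "f x = f y"
    obtain a where a: "x = int a" "a < N" using x carrZ by (metis atLeastLessThan_iff nonneg_int_cases of_nat_less_iff)
    obtain b where b: "y = int b" "b < N" using y carrZ by (metis atLeastLessThan_iff nonneg_int_cases of_nat_less_iff)
    have "w [^] a = w [^] b" using e a b unfolding f_def by simp
    moreover have "a \<in> {0 .. ord w - 1}" "b \<in> {0 .. ord w - 1}" using a b N_def by auto
    ultimately have "a = b" using ord_inj[OF w] unfolding inj_on_def by blast
    then show "x = y" using a b by simp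
  qed
  have surj: "f ` carrier (integer_mod_group N) = carrier G"
  proof
    show "f ` carrier (integer_mod_group N) \<subseteq> carrier G" unfolding f_def using w by auto
  next
    show "carrier G \<subseteq> f ` carrier (integer_mod_group N)"
    proof
      fix x assume x: "x \<in> carrier G"
      obtain k :: nat where k: "x = w [^] k" using all[OF x] unfolding pw_def by blast
      have "w [^] k = w [^] (k mod N)" by (rule pow_mod_eq[OF w wN]) simp
      then have xf: "x = f (int (k mod N))" unfolding f_def using k by simp
      have mem: "int (k mod N) \<in> carrier (integer_mod_group N)" using carrZ N0 by simp
      show "x \<in> f ` carrier (integer_mod_group N)" using xf mem by (rule image_eqI)
    qed
  qed
  have "f \<in> iso (integer_mod_group N) G"
    unfolding iso_def bij_betw_def using hom inj surj by simp
  then have "integer_mod_group N \<cong> G" unfolding is_iso_def by blast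
  then show ?thesis using group.iso_sym[OF group_integer_mod_group] N_def by blast
qed

end

context fgroup
begin

lemma bip_of_iso:
  fixes p q :: nat
  assumes p: "Factorial_Ring.prime p" and q: "Factorial_Ring.prime q" and pq: "p \<noteq> q"
    and phi: "\<phi> \<in> iso G (integer_mod_group (p ^ \<alpha> * q))"
  shows "bipartite (diff_vertices G) (diff_edge G)"
proof -
  define n where "n = p ^ \<alpha> * q"
  have n0: "n > 0" using p q n_def by (simp add: prime_gt_0_nat)
  have hom: "\<phi> \<in> hom G (integer_mod_group n)" and bij: "bij_betw \<phi> (carrier G) (carrier (integer_mod_group n))"
    using phi n_def unfolding iso_def by auto
  have carrZ: "carrier (integer_mod_group n) = {0..<int n}" using n0 by (simp add: carrier_integer_mod_group)
  have inj: "inj_on \<phi> (carrier G)" using bij bij_betw_def by blast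
  have phic: "\<phi> x \<in> {0..<int n}" if "x \<in> carrier G" for x
    using hom that carrZ unfolding hom_def by auto
  have phipow: "\<phi> (y [^] k) = (int k * \<phi> y) mod int n" if "y \<in> carrier G" for y k
    using hom_nat_pow[OF hom that is_group group_integer_mod_group] by simp
  have key: "pw G x y" if x: "x \<in> carrier G" and y: "y \<in> carrier G" and d: "gcd (\<phi> y) (int n) dvd \<phi> x" for x y
  proof -
    obtain k :: nat where k: "\<phi> x mod int n = (int k * \<phi> y) mod int n"
      using bezout_mod[OF _ d] n0 by auto
    have "\<phi> x mod int n = \<phi> x" using phic[OF x] by simp
    then have "\<phi> x = \<phi> (y [^] k)" using k phipow[OF y] by simp
    then have "x = y [^] k" using inj x y unfolding inj_on_def by (meson nat_pow_closed)
    then show ?thesis unfolding pw_def by blast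
  qed
  have main: "\<not> (int q dvd \<phi> x \<longleftrightarrow> int q dvd \<phi> y)" if e: "E G x y" for x y
  proof
    assume iff: "int q dvd \<phi> x \<longleftrightarrow> int q dvd \<phi> y"
    have x: "x \<in> carrier G" and y: "y \<in> carrier G" and nxy: "\<not> pw G x y" and nyx: "\<not> pw G y x"
      using e unfolding E_def by auto
    obtain Xn where Xn: "\<phi> x = int Xn" using phic[OF x] by (metis atLeastLessThan_iff nonneg_int_cases)
    obtain Yn where Yn: "\<phi> y = int Yn" using phic[OF y] by (metis atLeastLessThan_iff nonneg_int_cases)
    have "q dvd Xn \<longleftrightarrow> q dvd Yn" using iff Xn Yn by simp
    then have "gcd Xn n dvd Yn \<or> gcd Yn n dvd Xn" using comparable_gcd[OF p q pq n_def] by blast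
    then show False
    proof
      assume "gcd Xn n dvd Yn"
      then have "gcd (\<phi> x) (int n) dvd \<phi> y" using Xn Yn by simp
      then show False using key[OF y x] nyx by blast
    next
      assume "gcd Yn n dvd Xn"
      then have "gcd (\<phi> y) (int n) dvd \<phi> x" using Xn Yn by simp
      then show False using key[OF x y] nxy by blast
    qed
  qed
  define A where "A = {x \<in> diff_vertices G. int q dvd \<phi> x}"
  define B where "B = diff_vertices G - A"
  show ?thesis unfolding bipartite_def
  proof (intro exI conjI ballI impI)
    show "A \<inter> B = {}" "A \<union> B = diff_vertices G" unfolding A_def B_def by auto
  next
    fix x y assume "x \<in> diff_vertices G" "y \<in> diff_vertices G" "diff_edge G x y"
    then show "x \<in> A \<and> y \<in> B \<or> x \<in> B \<and> y \<in> A"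
      using main[of x y] diff_edge_iff unfolding A_def B_def by blast
  qed
qed

end

locale bipl = fgroup +
  fixes p q :: nat and a b
  assumes p: "Factorial_Ring.prime p" and q: "Factorial_Ring.prime q" and pq: "p \<noteq> q"
    and a: "a \<in> carrier G" and ac: "\<And>g. g \<in> carrier G \<Longrightarrow> a \<otimes> g = g \<otimes> a"
    and a1: "a \<noteq> \<one>" and ap: "a [^] p = \<one>"
    and b: "b \<in> carrier G" and bc: "\<And>g. g \<in> carrier G \<Longrightarrow> b \<otimes> g = g \<otimes> b"
    and b1: "b \<noteq> \<one>" and bq: "b [^] q = \<one>"
    and notri: "\<And>x y z. E G x y \<Longrightarrow> E G y z \<Longrightarrow> E G x z \<Longrightarrow> False"
    and nofive: "\<And>x1 x2 x3 x4 x5. E G x1 x2 \<Longrightarrow> E G x2 x3 \<Longrightarrow> E G x3 x4 \<Longrightarrow> E G x4 x5 \<Longrightarrow> E G x5 x1 \<Longrightarrow> False"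
begin

lemma cpq: "coprime p q" using primes_coprime[OF p q pq] .

lemma K1:
  assumes y: "y \<in> carrier G" and yp: "y [^] p = \<one>" and y1: "y \<noteq> \<one>"
  shows "pw G y a"
proof (rule ccontr)
  assume nya: "\<not> pw G y a"
  define z where "z = a \<otimes> y"
  have z: "z \<in> carrier G" using a y z_def by simp
  have zp: "z [^] p = \<one>" using pow_mult_distrib[OF ac[OF y] a y] ap yp z_def by simp
  have yz: "y = inv a \<otimes> z" using a y z_def by (simp add: m_assoc[symmetric])
  have az: "a = z \<otimes> inv y" using a y z_def by (simp add: m_assoc)
  have F1: "\<not> pw G a y" using gen_prime[OF y p yp _ a1] nya by blast
  have F3: "\<not> pw G z a"
  proof
    assume "pw G z a"
    then have "pw G (inv a \<otimes> z) a" using pw_mult[OF pw_inv[OF pw_refl[OF a] a]] a by blast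
    then show False using nya yz by simp
  qed
  have F2: "\<not> pw G a z" using gen_prime[OF z p zp _ a1] F3 by blast
  have F4: "\<not> pw G y z"
  proof
    assume "pw G y z"
    then have "pw G (z \<otimes> inv y) z" using pw_mult[OF pw_refl[OF z] pw_inv] z by blast
    then show False using F2 az by simp
  qed
  have F5: "\<not> pw G z y"
  proof
    assume "pw G z y"
    then have "pw G (z \<otimes> inv y) y" using pw_mult[OF _ pw_inv[OF pw_refl[OF y] y]] y by blast
    then show False using F1 az by simp
  qed
  have Eay: "E G (a \<otimes> b) (y \<otimes> b)"
    by (rule E_c[OF a y b bc[OF a, symmetric] bc[OF y, symmetric] ap yp bq cpq b1])
       (use F1 nya in auto)
  have Eaz: "E G (a \<otimes> b) (z \<otimes> b)"
    by (rule E_c[OF a z b bc[OF a, symmetric] bc[OF z, symmetric] ap zp bq cpq b1])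
       (use F2 F3 in auto)
  have Eyz: "E G (y \<otimes> b) (z \<otimes> b)"
    by (rule E_c[OF y z b bc[OF y, symmetric] bc[OF z, symmetric] yp zp bq cpq b1])
       (use F4 F5 in auto)
  show False using notri[OF Eay Eyz Eaz] .
qed

lemma pa:
  assumes x: "x \<in> carrier G" and xp: "x [^] (p ^ i) = \<one>" and x1: "x \<noteq> \<one>"
  shows "pw G a x"
proof -
  obtain j where j: "x [^] (p ^ j) \<noteq> \<one>" "(x [^] (p ^ j)) [^] p = \<one>"
    using prime_order_power[OF x xp x1] by blast
  have h: "pw G (x [^] (p ^ j)) a" using K1 j x by simp
  have "pw G a (x [^] (p ^ j))" by (rule gen_prime[OF a p ap h]) (use j in simp)
  moreover have "pw G (x [^] (p ^ j)) x" unfolding pw_def by blast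
  ultimately show ?thesis using pw_trans x by blast
qed

lemma E_xab:
  assumes x: "x \<in> carrier G" and xp: "x [^] (p ^ i) = \<one>" and pax: "pw G a x" and nxa: "\<not> pw G x a"
  shows "E G x (a \<otimes> b)"
proof -
  have ab: "a \<otimes> b \<in> carrier G" using a b by simp
  have cop: "coprime (p ^ i) q" using cop_pow[OF p q pq, of i 1] by simp
  have "\<not> pw G (a \<otimes> b) x"
  proof
    assume "pw G (a \<otimes> b) x"
    moreover have "pw G b (a \<otimes> b)" using pw_prod2[OF a b bc[OF a, symmetric] ap bq cpq] bc a by simp
    ultimately have "pw G b x" using pw_trans x by blast
    then have "b = \<one>" using pw_one_coprime[OF _ x xp bq] cop by (simp add: coprime_commute)
    then show False using b1 by simp
  qed
  moreover have "\<not> pw G x (a \<otimes> b)"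
  proof
    assume "pw G x (a \<otimes> b)"
    then have "pw G x a" using pw_strip[OF a b bc[OF a, symmetric] xp bq cop] bc[OF a] by simp
    then show False using nxa by simp
  qed
  moreover have "pw G a (a \<otimes> b)" using pw_prod[OF a b bc[OF a, symmetric] ap bq cpq] bc a by simp
  ultimately show ?thesis unfolding E_def using x ab pax a1 by auto
qed

lemma chain:
  assumes x: "x \<in> carrier G" and xp: "x [^] (p ^ i) = \<one>"
    and y: "y \<in> carrier G" and yp: "y [^] (p ^ j) = \<one>"
  shows "pw G x y \<or> pw G y x"
proof (rule ccontr)
  assume n: "\<not> (pw G x y \<or> pw G y x)"
  then have x1: "x \<noteq> \<one>" and y1: "y \<noteq> \<one>" using pw_one by auto
  have pax: "pw G a x" using pa[OF x xp x1] .
  have pay: "pw G a y" using pa[OF y yp y1] .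
  have nxa: "\<not> pw G x a" using n pay pw_trans y by blast
  have nya: "\<not> pw G y a" using n pax pw_trans x by blast
  have "E G x y" unfolding E_def using x y n pax pay a1 by auto
  moreover have "E G x (a \<otimes> b)" using E_xab[OF x xp pax nxa] .
  moreover have "E G y (a \<otimes> b)" using E_xab[OF y yp pay nya] .
  ultimately show False using notri by blast
qed

lemma exists_max:
  "\<exists>u \<in> carrier G. (\<exists>i. u [^] (p ^ i) = \<one>) \<and>
     (\<forall>x \<in> carrier G. (\<exists>i. x [^] (p ^ i) = \<one>) \<longrightarrow> pw G x u)"
proof -
  define S where "S = {x \<in> carrier G. \<exists>i. x [^] (p ^ i) = \<one>}"
  define f where "f = (\<lambda>x. card {z. pw G z x})"
  have finS: "finite S" using fin unfolding S_def by simp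
  have "\<one> \<in> S" unfolding S_def by simp
  then have ne: "S \<noteq> {}" by blast
  have "Max (f ` S) \<in> f ` S" using Max_in[OF finite_imageI[OF finS]] ne by blast
  then obtain u where u: "u \<in> S" "f u = Max (f ` S)" by (metis imageE)
  have fin_pw: "finite {z. pw G z x}" if "x \<in> carrier G" for x
    using fin pw_closed that by (metis (no_types, lifting) mem_Collect_eq rev_finite_subset subsetI)
  have "pw G x u" if xS: "x \<in> S" for x
  proof (rule ccontr)
    assume nxu: "\<not> pw G x u"
    have xc: "x \<in> carrier G" and uc: "u \<in> carrier G" using xS u(1) unfolding S_def by auto
    then have "pw G u x" using chain nxu xS u(1) unfolding S_def by blast
    then have "{z. pw G z u} \<subset> {z. pw G z x}" using pw_trans xc nxu pw_refl[OF xc] by blast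
    then have "f u < f x" unfolding f_def using psubset_card_mono fin_pw[OF xc] by blast
    moreover have "f x \<le> f u" using u(2) xS finS by simp
    ultimately show False by simp
  qed
  then show ?thesis using u(1) unfolding S_def by blast
qed

lemma no_third_prime:
  assumes g: "g \<in> carrier G" and r: "Factorial_Ring.prime r" and gr: "g [^] r = \<one>" and g1: "g \<noteq> \<one>"
  shows "r = p \<or> r = q"
proof (rule ccontr)
  assume nr: "\<not> (r = p \<or> r = q)"
  have cpr: "coprime p r" using primes_coprime[OF p r] nr by auto
  have cqr: "coprime q r" using primes_coprime[OF q r] nr by auto
  have cp: "coprime p (q * r)" using cpq cpr by simp
  have cq: "coprime q (p * r)" using cpq cqr by (simp add: coprime_commute)
  have cr: "coprime r (p * q)" using cpr cqr by (simp add: coprime_commute)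
  have ag: "a \<otimes> g \<in> carrier G" and bg: "b \<otimes> g \<in> carrier G" and ab: "a \<otimes> b \<in> carrier G" using a b g by auto
  have agc: "a \<otimes> g = g \<otimes> a" using ac g by simp
  have bgc: "b \<otimes> g = g \<otimes> b" using bc g by simp
  have abc: "a \<otimes> b = b \<otimes> a" using ac b by simp
  have eag: "(a \<otimes> g) [^] (p * r) = \<one>" using pow_prod_one[OF a g agc ap gr] .
  have ebg: "(b \<otimes> g) [^] (q * r) = \<one>" using pow_prod_one[OF b g bgc bq gr] .
  have eab: "(a \<otimes> b) [^] (p * q) = \<one>" using pow_prod_one[OF a b abc ap bq] .
  have N1: "\<not> pw G a (b \<otimes> g)" using pw_one_coprime[OF _ bg ebg ap cp] a1 by blast
  have N2: "\<not> pw G b (a \<otimes> g)" using pw_one_coprime[OF _ ag eag bq cq] b1 by blast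
  have N3: "\<not> pw G g (a \<otimes> b)" using pw_one_coprime[OF _ ab eab gr cr] g1 by blast
  have P1: "pw G a (a \<otimes> g)" using pw_prod[OF a g agc ap gr cpr] .
  have P2: "pw G g (a \<otimes> g)" using pw_prod2[OF a g agc ap gr cpr] .
  have P3: "pw G b (b \<otimes> g)" using pw_prod[OF b g bgc bq gr cqr] .
  have P4: "pw G g (b \<otimes> g)" using pw_prod2[OF b g bgc bq gr cqr] .
  have P5: "pw G a (a \<otimes> b)" using pw_prod[OF a b abc ap bq cpq] .
  have P6: "pw G b (a \<otimes> b)" using pw_prod2[OF a b abc ap bq cpq] .
  have E1: "E G (a \<otimes> g) (b \<otimes> g)" unfolding E_def
    using ag bg P1 P2 P3 P4 N1 N2 g1 pw_trans by blast
  have E2: "E G (b \<otimes> g) (a \<otimes> b)" unfolding E_def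
    using ab bg P3 P4 P5 P6 N1 N3 b1 pw_trans by blast
  have E3: "E G (a \<otimes> g) (a \<otimes> b)" unfolding E_def
    using ag ab P1 P2 P5 P6 N2 N3 a1 pw_trans by blast
  show False using notri[OF E1 E2 E3] .
qed

end

lemma bipl_swap: "bipl G p q a b \<Longrightarrow> bipl G q p b a"
  unfolding bipl_def bipl_axioms_def by blast

context fgroup
begin

lemma l_canc: "x \<in> carrier G \<Longrightarrow> y \<in> carrier G \<Longrightarrow> inv x \<otimes> (x \<otimes> y) = y"
  by (simp add: m_assoc[symmetric])

lemma comm_of_commutator:
  assumes u: "u \<in> carrier G" and v: "v \<in> carrier G" and c: "u \<otimes> v \<otimes> inv u \<otimes> inv v = \<one>"
  shows "u \<otimes> v = v \<otimes> u"
proof -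
  have "u \<otimes> v = (u \<otimes> v \<otimes> inv u \<otimes> inv v) \<otimes> (v \<otimes> u)"
    using u v by (simp add: m_assoc l_canc)
  then show ?thesis using c u v by simp
qed

end

lemma cop_sum:
  fixes A B :: nat
  assumes "coprime A B"
  shows "coprime (B + A) (A * B)"
proof -
  have "gcd (B + A) A = gcd B A" by (rule gcd_add1)
  then have 1: "gcd (B + A) A = 1" using assms by (simp add: gcd.commute coprime_iff_gcd_eq_1)
  have "gcd (A + B) B = 1" using assms by (simp add: coprime_iff_gcd_eq_1)
  then have 2: "gcd (B + A) B = 1" by (simp add: add.commute)
  have c1: "coprime (B + A) A" using 1 by (simp only: coprime_iff_gcd_eq_1)
  have c2: "coprime (B + A) B" using 2 by (simp only: coprime_iff_gcd_eq_1)
  show ?thesis using c1 c2 by simp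
qed

context bipl
begin

lemma E_ord:
  assumes v: "v \<in> carrier G" and w: "w \<in> carrier G" and z: "z \<noteq> \<one>" "pw G z v" "pw G z w"
    and n1: "\<not> ord v dvd ord w" and n2: "\<not> ord w dvd ord v"
  shows "E G v w"
  unfolding E_def using v w z n1 n2 ord_pw_dvd by blast

lemma five:
  assumes x: "x \<in> carrier G" and y: "y \<in> carrier G" and cm: "x \<otimes> y = y \<otimes> x"
    and ox: "ord x = p ^ 2" and oy: "ord y = q ^ 2"
  shows False
proof -
  define x1 where "x1 = x [^] p"
  define y1 where "y1 = y [^] q"
  have x1c: "x1 \<in> carrier G" and y1c: "y1 \<in> carrier G" using x y x1_def y1_def by auto
  have p0: "p \<noteq> 0" and q0: "q \<noteq> 0" using p q by auto
  have ox1: "ord x1 = p" unfolding x1_def using ord_pow[OF x _ p0] ox p0 by (simp add: power2_eq_square)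
  have oy1: "ord y1 = q" unfolding y1_def using ord_pow[OF y _ q0] oy q0 by (simp add: power2_eq_square)
  have c1: "x1 \<otimes> y = y \<otimes> x1" unfolding x1_def using group_commutes_pow[OF cm x y] by simp
  have c2: "x \<otimes> y1 = y1 \<otimes> x" unfolding y1_def using group_commutes_pow[OF cm[symmetric] y x] by simp
  have c3: "x1 \<otimes> y1 = y1 \<otimes> x1" unfolding x1_def y1_def using comm_pows[OF x y cm] by simp
  have cA: "coprime (p ^ a) (q ^ b)" for a b using cop_pow[OF p q pq] .
  have o1: "ord (x1 \<otimes> y) = p * q ^ 2" using ord_prod[OF x1c y c1] ox1 oy cA[of 1 2] by simp
  have o2: "ord (x \<otimes> y1) = p ^ 2 * q" using ord_prod[OF x y1c c2] ox oy1 cA[of 2 1] by simp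
  have o3: "ord (x1 \<otimes> y1) = p * q" using ord_prod[OF x1c y1c c3] ox1 oy1 cA[of 1 1] by simp
  have x11: "x1 \<noteq> \<one>" using ox1 p by (metis ord_id not_prime_1)
  have y11: "y1 \<noteq> \<one>" using oy1 q by (metis ord_id not_prime_1)
  have ex1: "x1 [^] ord x1 = \<one>" "y [^] ord y = \<one>" "x [^] ord x = \<one>" "y1 [^] ord y1 = \<one>"
    using x1c y x y1c by auto
  have pw1: "pw G x1 x" unfolding x1_def pw_def by blast
  have pw2: "pw G y1 y" unfolding y1_def pw_def by blast
  have pw3: "pw G x1 (x1 \<otimes> y)" using pw_prod[OF x1c y c1 ex1(1) ex1(2)] cA[of 1 2] ox1 oy by simp
  have pw4: "pw G x (x \<otimes> y1)" using pw_prod[OF x y1c c2 ex1(3) ex1(4)] cA[of 2 1] ox oy1 by simp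
  have pw5: "pw G y1 (x \<otimes> y1)" using pw_prod2[OF x y1c c2 ex1(3) ex1(4)] cA[of 2 1] ox oy1 by simp
  have pw6: "pw G x1 (x1 \<otimes> y1)" using pw_prod[OF x1c y1c c3 ex1(1) ex1(4)] cA[of 1 1] ox1 oy1 by simp
  have pw7: "pw G y1 (x1 \<otimes> y1)" using pw_prod2[OF x1c y1c c3 ex1(1) ex1(4)] cA[of 1 1] ox1 oy1 by simp
  have pw8: "pw G x1 (x \<otimes> y1)" using pw_trans[OF pw1 pw4] x y1c by simp
  have nd: "\<not> (p ^ a * q ^ b dvd p ^ c * q ^ d)" if "c < a \<or> d < b" for a b c d
    using pq_dvd[OF p q pq, of a b c d] that by auto
  have n1: "\<not> p ^ 2 * q ^ 0 dvd p ^ 1 * q ^ 2" by (rule nd) simp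
  have n2: "\<not> p ^ 1 * q ^ 2 dvd p ^ 2 * q ^ 0" by (rule nd) simp
  have n3: "\<not> p ^ 1 * q ^ 2 dvd p ^ 2 * q ^ 1" by (rule nd) simp
  have n4: "\<not> p ^ 2 * q ^ 1 dvd p ^ 1 * q ^ 2" by (rule nd) simp
  have n5: "\<not> p ^ 2 * q ^ 1 dvd p ^ 0 * q ^ 2" by (rule nd) simp
  have n6: "\<not> p ^ 0 * q ^ 2 dvd p ^ 2 * q ^ 1" by (rule nd) simp
  have n7: "\<not> p ^ 0 * q ^ 2 dvd p ^ 1 * q ^ 1" by (rule nd) simp
  have n8: "\<not> p ^ 1 * q ^ 1 dvd p ^ 0 * q ^ 2" by (rule nd) simp
  have n9: "\<not> p ^ 1 * q ^ 1 dvd p ^ 2 * q ^ 0" by (rule nd) simp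
  have n10: "\<not> p ^ 2 * q ^ 0 dvd p ^ 1 * q ^ 1" by (rule nd) simp
  have E1: "E G x (x1 \<otimes> y)"
    by (rule E_ord[OF x _ x11 pw1 pw3]) (use x1c y n1 n2 ox o1 in simp_all)
  have E2: "E G (x1 \<otimes> y) (x \<otimes> y1)"
    by (rule E_ord[OF _ _ x11 pw3 pw8]) (use x1c y x y1c n3 n4 o1 o2 in simp_all)
  have E3: "E G (x \<otimes> y1) y"
    by (rule E_ord[OF _ y y11 pw5 pw2]) (use x y1c n5 n6 o2 oy in simp_all)
  have E4: "E G y (x1 \<otimes> y1)"
    by (rule E_ord[OF y _ y11 pw2 pw7]) (use x1c y1c n7 n8 oy o3 in simp_all)
  have E5: "E G (x1 \<otimes> y1) x"
    by (rule E_ord[OF _ x x11 pw6 pw1]) (use x1c y1c n9 n10 o3 ox in simp_all)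
  show False using nofive[OF E1 E2 E3 E4 E5] .
qed

end

lemma main_fwd:
  fixes G (structure)
  assumes B: "bipl G p q a b"
  shows "\<exists>p q \<alpha> :: nat. Factorial_Ring.prime p \<and> Factorial_Ring.prime q \<and> p \<noteq> q \<and> \<alpha> \<ge> 1 \<and>
       G \<cong> integer_mod_group (p ^ \<alpha> * q)"
proof -
  interpret bipl G p q a b by (rule B)
  have sw: "bipl G q p b a" using bipl_swap[OF B] .
  obtain u where u: "u \<in> carrier G" "\<exists>i. u [^] (p ^ i) = \<one>"
    and umax: "\<forall>x\<in>carrier G. (\<exists>i. x [^] (p ^ i) = \<one>) \<longrightarrow> pw G x u"
    using exists_max by blast
  obtain v where v: "v \<in> carrier G" "\<exists>i. v [^] (q ^ i) = \<one>"
    and vmax: "\<forall>x\<in>carrier G. (\<exists>i. x [^] (q ^ i) = \<one>) \<longrightarrow> pw G x v"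
    using bipl.exists_max[OF sw] by blast
  obtain iu where iu: "u [^] (p ^ iu) = \<one>" using u(2) by blast
  obtain jv where jv: "v [^] (q ^ jv) = \<one>" using v(2) by blast
  have cA: "coprime (p ^ a') (q ^ b')" for a' b' using cop_pow[OF p q pq] .
  have invu: "inv u [^] (p ^ iu) = \<one>" using pw_exp[OF pw_inv[OF pw_refl[OF u(1)] u(1)] u(1) iu] .
  have invv: "inv v [^] (q ^ jv) = \<one>" using pw_exp[OF pw_inv[OF pw_refl[OF v(1)] v(1)] v(1) jv] .
  have h1: "pw G (v \<otimes> inv u \<otimes> inv v) u"
  proof -
    have "(v \<otimes> inv u \<otimes> inv v) [^] (p ^ iu) = \<one>"
      using conj_pow[OF v(1) inv_closed[OF u(1)]] invu v(1) by simp
    moreover have "v \<otimes> inv u \<otimes> inv v \<in> carrier G" using u v by simp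
    ultimately show ?thesis using umax by blast
  qed
  have h2: "pw G (u \<otimes> v \<otimes> inv u) v"
  proof -
    have "(u \<otimes> v \<otimes> inv u) [^] (q ^ jv) = \<one>"
      using conj_pow[OF u(1) v(1)] jv u(1) by simp
    moreover have "u \<otimes> v \<otimes> inv u \<in> carrier G" using u v by simp
    ultimately show ?thesis using vmax by blast
  qed
  define c where "c = u \<otimes> v \<otimes> inv u \<otimes> inv v"
  have cc: "c \<in> carrier G" using u v c_def by simp
  have cu: "c = u \<otimes> (v \<otimes> inv u \<otimes> inv v)" using u v by (simp add: c_def m_assoc)
  have pcu: "pw G c u" unfolding cu using pw_mult[OF pw_refl[OF u(1)] h1 u(1)] .
  have pcv: "pw G c v" unfolding c_def using pw_mult[OF h2 pw_inv[OF pw_refl[OF v(1)] v(1)] v(1)] .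
  have "c = \<one>"
    using one_of_coprime[OF cc pw_exp[OF pcu u(1) iu] pw_exp[OF pcv v(1) jv] cA] .
  then have uv: "u \<otimes> v = v \<otimes> u" using comm_of_commutator[OF u(1) v(1)] c_def by simp
  define w where "w = u \<otimes> v"
  have wc: "w \<in> carrier G" using u v w_def by simp
  have puw: "pw G u w" unfolding w_def using pw_prod[OF u(1) v(1) uv iu jv cA] .
  have pvw: "pw G v w" unfolding w_def using pw_prod2[OF u(1) v(1) uv iu jv cA] .
  have N0: "order G \<noteq> 0" using fin order_gt_0_iff_finite by auto
  have primes: "r = p \<or> r = q" if r: "Factorial_Ring.prime r" "r dvd order G" for r
  proof -
    obtain g where g: "g \<in> carrier G" "g \<noteq> \<one>" "g [^] r = \<one>" using cauchy[OF is_group fin r] by blast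
    show ?thesis using no_third_prime[OF g(1) r(1) g(3) g(2)] .
  qed
  obtain i j where N: "order G = p ^ i * q ^ j" using factor_pq[OF p q N0 primes] by blast
  have all: "pw G g w" if g: "g \<in> carrier G" for g
  proof -
    have gN: "g [^] (p ^ i * q ^ j) = \<one>" using pow_order_eq_1[OF g] N by simp
    define gp where "gp = g [^] (q ^ j)"
    define gq where "gq = g [^] (p ^ i)"
    have "gp [^] (p ^ i) = \<one>" using gN g by (simp add: gp_def nat_pow_pow mult.commute)
    then have pgp: "pw G gp u" using umax g gp_def by auto
    have "gq [^] (q ^ j) = \<one>" using gN g by (simp add: gq_def nat_pow_pow)
    then have pgq: "pw G gq v" using vmax g gq_def by auto
    have "pw G (gp \<otimes> gq) w" using pw_mult[OF pw_trans[OF pgp puw wc] pw_trans[OF pgq pvw wc] wc] .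
    moreover have "gp \<otimes> gq = g [^] (q ^ j + p ^ i)" using g by (simp add: gp_def gq_def nat_pow_mult)
    moreover have "pw G g (g [^] (q ^ j + p ^ i))"
      using pw_pow_coprime[OF g gN cop_sum[OF cA[of i j]]] .
    ultimately show ?thesis using pw_trans wc by metis
  qed
  have iso: "G \<cong> integer_mod_group (ord w)" using cyclic_iso[OF wc all] .
  have "ord u dvd p ^ iu" using iu u(1) pow_eq_id by blast
  then obtain m1 where m1: "ord u = p ^ m1" using divides_primepow_nat[OF p] by blast
  have "ord v dvd q ^ jv" using jv v(1) pow_eq_id by blast
  then obtain n1 where n1: "ord v = q ^ n1" using divides_primepow_nat[OF q] by blast
  have ow: "ord w = p ^ m1 * q ^ n1" using ord_prod[OF u(1) v(1) uv] m1 n1 cA w_def by simp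
  have m1p: "m1 \<ge> 1"
  proof (rule ccontr)
    assume "\<not> 1 \<le> m1" then have "ord u = 1" using m1 by simp
    then have u1: "u = \<one>" using ord_eq_1 u(1) by blast
    have "a [^] (p ^ 1) = \<one>" using ap by simp
    then have "pw G a u" using umax a by blast
    then have "a = \<one>" using u1 unfolding pw_def by simp
    then show False using a1 by simp
  qed
  have n1p: "n1 \<ge> 1"
  proof (rule ccontr)
    assume "\<not> 1 \<le> n1" then have "ord v = 1" using n1 by simp
    then have v1: "v = \<one>" using ord_eq_1 v(1) by blast
    have "b [^] (q ^ 1) = \<one>" using bq by simp
    then have "pw G b v" using vmax b by blast
    then have "b = \<one>" using v1 unfolding pw_def by simp
    then show False using b1 by simp
  qed
  have not22: "\<not> (m1 \<ge> 2 \<and> n1 \<ge> 2)"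
  proof
    assume h: "m1 \<ge> 2 \<and> n1 \<ge> 2"
    define x where "x = u [^] (p ^ (m1 - 2))"
    define y where "y = v [^] (q ^ (n1 - 2))"
    have xc: "x \<in> carrier G" and yc: "y \<in> carrier G" using u v x_def y_def by auto
    have em: "m1 = (m1 - 2) + 2" and en: "n1 = (n1 - 2) + 2" using h by arith+
    have pm: "p ^ m1 = p ^ (m1 - 2) * p ^ 2" using em by (metis power_add)
    have qn: "q ^ n1 = q ^ (n1 - 2) * q ^ 2" using en by (metis power_add)
    have p0: "p ^ (m1 - 2) \<noteq> 0" and q0: "q ^ (n1 - 2) \<noteq> 0" using p q by auto
    have ox: "ord x = p ^ 2"
      unfolding x_def using ord_pow[OF u(1) _ p0] m1 pm p0 by simp
    have oy: "ord y = q ^ 2"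
      unfolding y_def using ord_pow[OF v(1) _ q0] n1 qn q0 by simp
    have cm: "x \<otimes> y = y \<otimes> x" unfolding x_def y_def using comm_pows[OF u(1) v(1) uv] .
    show False using five[OF xc yc cm ox oy] .
  qed
  show ?thesis
  proof (cases "n1 = 1")
    case True
    then have "G \<cong> integer_mod_group (p ^ m1 * q)" using iso ow by simp
    then show ?thesis using p q pq m1p by blast
  next
    case False
    then have "m1 = 1" using not22 m1p n1p by simp
    then have "G \<cong> integer_mod_group (q ^ n1 * p)" using iso ow by (simp add: mult.commute)
    moreover have "q \<noteq> p" using pq by simp
    ultimately show ?thesis using p q n1p by blast
  qed
qed

theorem theorem7p5:
  fixes G :: "('a, 'b) monoid_scheme"
  assumes "group G" and "finite (carrier G)"
    and "\<exists>p q :: nat. Factorial_Ring.prime p \<and> Factorial_Ring.prime q \<and> p \<noteq> q \<and>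
           p dvd card (group_center G) \<and> q dvd card (group_center G)"
  shows "bipartite (diff_vertices G) (diff_edge G) \<longleftrightarrow>
    (\<exists>p q \<alpha> :: nat. Factorial_Ring.prime p \<and> Factorial_Ring.prime q \<and> p \<noteq> q \<and> \<alpha> \<ge> 1 \<and>
       G \<cong> integer_mod_group (p ^ \<alpha> * q))"
proof -
  have FG: "fgroup G" using assms(1,2) by (simp add: fgroup_def fgroup_axioms_def)
  obtain p q :: nat where p: "Factorial_Ring.prime p" and q: "Factorial_Ring.prime q" and pq: "p \<noteq> q"
    and pd: "p dvd card (group_center G)" and qd: "q dvd card (group_center G)"
    using assms(3) by blast
  show ?thesis
  proof
    assume bip: "bipartite (diff_vertices G) (diff_edge G)"
    obtain a where a: "a \<in> group_center G" "a \<noteq> \<one>\<^bsub>G\<^esub>" "a [^]\<^bsub>G\<^esub> p = \<one>\<^bsub>G\<^esub>"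
      using center_cauchy[OF assms(1,2) p pd] by blast
    obtain b where b: "b \<in> group_center G" "b \<noteq> \<one>\<^bsub>G\<^esub>" "b [^]\<^bsub>G\<^esub> q = \<one>\<^bsub>G\<^esub>"
      using center_cauchy[OF assms(1,2) q qd] by blast
    have B: "bipl G p q a b"
      apply (rule bipl.intro[OF FG])
      apply (rule bipl_axioms.intro)
      subgoal by (rule p)
      subgoal by (rule q)
      subgoal by (rule pq)
      subgoal using a(1) unfolding group_center_def by blast
      subgoal for g using a(1) unfolding group_center_def by blast
      subgoal by (rule a(2))
      subgoal by (rule a(3))
      subgoal using b(1) unfolding group_center_def by blast
      subgoal for g using b(1) unfolding group_center_def by blast
      subgoal by (rule b(2))
      subgoal by (rule b(3))
      subgoal for x y z using fgroup.no_tri[OF FG bip] by blast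
      subgoal for x1 x2 x3 x4 x5 using fgroup.no_five[OF FG bip] by blast
      done
    show "\<exists>p q \<alpha> :: nat. Factorial_Ring.prime p \<and> Factorial_Ring.prime q \<and> p \<noteq> q \<and> \<alpha> \<ge> 1 \<and>
       G \<cong> integer_mod_group (p ^ \<alpha> * q)" using main_fwd[OF B] .
  next
    assume "\<exists>p q \<alpha> :: nat. Factorial_Ring.prime p \<and> Factorial_Ring.prime q \<and> p \<noteq> q \<and> \<alpha> \<ge> 1 \<and>
       G \<cong> integer_mod_group (p ^ \<alpha> * q)"
    then obtain p q \<alpha> :: nat where p: "Factorial_Ring.prime p" and q: "Factorial_Ring.prime q" and pq: "p \<noteq> q"
      and iso: "G \<cong> integer_mod_group (p ^ \<alpha> * q)" by blast
    obtain \<phi> where \<phi>: "\<phi> \<in> iso G (integer_mod_group (p ^ \<alpha> * q))" using iso unfolding is_iso_def by blast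
    show "bipartite (diff_vertices G) (diff_edge G)" using fgroup.bip_of_iso[OF FG p q pq \<phi>] .
  qed
qed

end
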